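(* Let $p\ge 7/32$. Then for all $r\in(0,1)$, $$\sqrt{(r-r^2)^p\,K(1-r)\,K(r)}\le \frac{K(1/2)}{2^p}=\frac{\pi\sqrt\pi}{2^{p+1}\Gamma(3/4)^2}.$$
   Context: $K(x)={\cal K}(\sqrt x)=\frac\pi2\,{}_2F_1(1/2,1/2;1;x)$ for $x\in[0,1)$, where ${\cal K}(r)=\int_0^{\pi/2}(1-r^2\sin^2t)^{-1/2}dt$ is the complete elliptic integral of the first kind. *)

theory Defs
  imports "HOL-Analysis.Analysis"
begin

definition ellipticK :: "real \<Rightarrow> real" where
  "ellipticK r = integral {0..pi/2} (\<lambda>t. 1 / sqrt (1 - r^2 * (sin t)^2))"

definition K :: "real \<Rightarrow> real" where
  "K x = ellipticK (sqrt x)"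

end

theory Submission
  imports Defs
begin

lemma onepcos: "1 + (cos t)^2 \<noteq> (0::real)" "1 + (cos t)^2 > (0::real)"
  by (smt (verit) zero_le_power2)+

lemma K_half_integral: "K (1/2) = integral {0..pi/2} (\<lambda>t. sqrt 2 / sqrt (1 + (cos t)^2))"
proof -
  have "K (1/2) = integral {0..pi/2} (\<lambda>t. 1 / sqrt (1 - (1/2) * (sin t)^2))"
    by (simp add: K_def ellipticK_def)
  also have "\<dots> = integral {0..pi/2} (\<lambda>t. sqrt 2 / sqrt (1 + (cos t)^2))"
  proof (rule integral_cong)
    fix t :: real
    have "1 - (1/2) * (sin t)^2 = (1 + (cos t)^2) / 2"
      by (simp add: cos_squared_eq field_simps)
    hence "sqrt (1 - (1/2) * (sin t)^2) = sqrt (1 + (cos t)^2) / sqrt 2"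
      by (simp only: real_sqrt_divide)
    then show "1 / sqrt (1 - (1/2) * (sin t)^2) = sqrt 2 / sqrt (1 + (cos t)^2)"
      by simp
  qed
  finally show ?thesis .
qed

lemma Beta_subst_integral:
  "((\<lambda>t. 4 / sqrt (1 + (cos t)^2)) has_integral Beta (1/2) (1/4)) {0..pi/2}"
proof -
  define f :: "real \<Rightarrow> real" where "f w = w powr (1/2 - 1) * (1 - w) powr (1/4 - 1)" for w
  define g :: "real \<Rightarrow> real" where "g t = 1 - (cos t)^4" for t
  define g' :: "real \<Rightarrow> real" where "g' t = 4 * (cos t)^3 * sin t" for t
  define h :: "real \<Rightarrow> real" where "h t = 4 / sqrt (1 + (cos t)^2)" for t
  have g0: "g 0 = 0" and g1: "g (pi/2) = 1" by (simp_all add: g_def)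
  have fB: "(f has_integral Beta (1/2) (1/4)) {0..1}"
    unfolding f_def by (rule has_integral_Beta_real) auto
  have fnn: "f w \<ge> 0" for w unfolding f_def by simp
  have meas: "set_borel_measurable borel {g 0..g (pi/2)} f"
    unfolding f_def set_borel_measurable_def by measurable
  have derivg: "(g has_real_derivative g' x) (at x)" for x
    unfolding g_def g'_def
    by (auto intro!: derivative_eq_intros simp: power3_eq_cube power4_eq_xxxx)
  have contg': "continuous_on {0..pi/2} g'" unfolding g'_def by (intro continuous_intros)
  have g'nn: "g' x \<ge> 0" if "x \<in> {0..pi/2}" for x
    using that unfolding g'_def by (auto intro!: mult_nonneg_nonneg sin_ge_zero cos_ge_zero)
  have subst: "(\<integral>\<^sup>+ x. ennreal (f x * indicator {g 0..g (pi/2)} x) \<partial>lborel) =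
     (\<integral>\<^sup>+ x. ennreal (f (g x) * g' x * indicator {0..pi/2} x) \<partial>lborel)"
    by (rule nn_integral_substitution[OF meas derivg contg' g'nn]) auto
  have L: "(\<integral>\<^sup>+ x. ennreal (f x * indicator {g 0..g (pi/2)} x) \<partial>lborel) = ennreal (Beta (1/2) (1/4))"
    using nn_integral_has_integral_lebesgue[OF _ fB] fnn unfolding g0 g1
    by (simp add: mult.commute)
  have hint: "(h has_integral integral {0..pi/2} h) {0..pi/2}"
    unfolding h_def by (intro integrable_integral integrable_continuous_real continuous_intros)
       (auto simp: onepcos)
  have eq: "f (g t) * g' t = h t" if "t \<in> {0<..<pi/2}" for t
  proof -
    have s: "sin t > 0" using that by (auto intro!: sin_gt_zero)
    have c: "cos t > 0" using that by (auto intro!: cos_gt_zero)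
    have gt: "g t = (sin t)^2 * (1 + (cos t)^2)"
      unfolding g_def using sin_cos_squared_add[of t] by algebra
    have "1 - g t = (cos t)^4" by (simp add: g_def)
    have A: "g t powr (1/2 - 1) = 1 / (sin t * sqrt (1 + (cos t)^2))"
      unfolding gt using s
      by (simp add: powr_minus_divide powr_mult powr_half_sqrt[symmetric] powr_powr[symmetric]
            add_pos_nonneg real_sqrt_mult powr_realpow)
    have B: "(1 - g t) powr (1/4 - 1) = 1 / (cos t)^3"
    proof -
      have "(1 - g t) powr (1/4 - 1) = ((cos t) powr 4) powr (-3/4)"
        using c by (simp add: g_def powr_realpow)
      also have "\<dots> = cos t powr (-3)" by (simp add: powr_powr)
      also have "\<dots> = 1 / (cos t)^3" using c by (simp add: powr_minus_divide powr_realpow)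
      finally show ?thesis .
    qed
    show ?thesis unfolding f_def A B h_def g'_def using s c
      by (simp add: field_simps power3_eq_cube)
  qed
  have hint2: "((\<lambda>t. f (g t) * g' t) has_integral integral {0..pi/2} h) {0..pi/2}"
  proof (rule has_integral_spike[OF _ _ hint])
    show "negligible {0, pi/2}" by simp
    show "f (g t) * g' t = h t" if "t \<in> {0..pi/2} - {0, pi/2}" for t
      using eq[of t] that by auto
  qed
  have fgnn: "f (g t) * g' t \<ge> 0" if "t \<in> {0..pi/2}" for t
    using fnn g'nn that by simp
  have R: "(\<integral>\<^sup>+ x. ennreal (f (g x) * g' x * indicator {0..pi/2} x) \<partial>lborel) = ennreal (integral {0..pi/2} h)"
    using nn_integral_has_integral_lebesgue[OF fgnn hint2] by (simp add: mult.commute)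
  have Bnn: "Beta (1/2) (1/4) \<ge> (0::real)"
    using has_integral_nonneg[OF fB] fnn by auto
  have hnn: "integral {0..pi/2} h \<ge> 0"
    using has_integral_nonneg[OF hint] by (auto simp: h_def)
  from subst L R have "ennreal (Beta (1/2) (1/4)) = ennreal (integral {0..pi/2} h)" by simp
  hence "Beta (1/2) (1/4) = integral {0..pi/2} h" using Bnn hnn by simp
  with hint show ?thesis unfolding h_def by simp
qed

lemma Gamma_refl_quarter: "Gamma (1/4::real) * Gamma (3/4) = sqrt 2 * pi"
proof -
  have "Gamma (complex_of_real (1/4)) * Gamma (1 - complex_of_real (1/4)) =
        of_real pi / sin (of_real pi * complex_of_real (1/4))"
    by (rule Gamma_reflection_complex)
  also have "1 - complex_of_real (1/4) = complex_of_real (3/4)" by simp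
  also have "of_real pi * complex_of_real (1/4) = complex_of_real (pi/4)" by simp
  also have "sin (complex_of_real (pi/4)) = complex_of_real (sin (pi/4))" by (rule sin_of_real)
  finally have "complex_of_real (Gamma (1/4) * Gamma (3/4)) = complex_of_real (pi / sin (pi/4))"
    using Gamma_complex_of_real[of "1/4"] Gamma_complex_of_real[of "3/4"] by simp
  hence "Gamma (1/4::real) * Gamma (3/4) = pi / sin (pi/4)" using of_real_eq_iff by blast
  also have "\<dots> = sqrt 2 * pi" by (simp add: sin_45 field_simps real_sqrt_divide)
  finally show ?thesis .
qed

lemma K_half_closed: "K (1/2) = pi * sqrt pi / (2 * (Gamma (3/4))^2)"
proof -
  have "K (1/2) = integral {0..pi/2} (\<lambda>t. (sqrt 2 / 4) * (4 / sqrt (1 + (cos t)^2)))"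
    unfolding K_half_integral by (rule integral_cong) auto
  also have "\<dots> = (sqrt 2 / 4) * Beta (1/2) (1/4)"
    by (subst integral_mult_right) (simp only: integral_unique[OF Beta_subst_integral])
  also have "Beta (1/2) (1/4) = Gamma (1/2) * Gamma (1/4) / Gamma (3/4 :: real)"
    by (simp add: Beta_def)
  also have "Gamma (1/4::real) = sqrt 2 * pi / Gamma (3/4)"
  proof -
    have "Gamma (3/4::real) > 0" by simp
    hence ne: "Gamma (3/4::real) \<noteq> 0" by linarith
    show ?thesis using ne Gamma_refl_quarter by (simp add: eq_divide_eq)
  qed
  finally show ?thesis by (simp add: Gamma_one_half_real power2_eq_square field_simps)
qed

lemma part2: "K (1/2) / 2 powr p = pi * sqrt pi / (2 powr (p + 1) * (Gamma (3/4))^2)"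
  unfolding K_half_closed by (simp add: powr_add field_simps)



fun bb :: "nat \<Rightarrow> real" where
  "bb 0 = 1"
| "bb (Suc n) = bb n * (2 * real n + 1) / (2 * real n + 2)"

definition aa :: "nat \<Rightarrow> real" where "aa n = (bb n)^2"

lemma bb_pos: "bb n > 0"
  by (induction n) auto

lemma bb_le1: "bb n \<le> 1"
proof (induction n)
  case (Suc n)
  have h0: "bb n * (2 * real n + 1) \<le> 1 * (2 * real n + 1)"
    by (rule mult_right_mono[OF Suc.IH]) simp
  have h: "bb n * (2 * real n + 1) \<le> 2 * real n + 2" by (rule order_trans[OF h0]) simp
  from h show ?case by (simp add: field_simps)
qed simp

lemma bb_gchoose: "(-1)^n * ((-1/2::real) gchoose n) = bb n"
proof (induction n)
  case (Suc n)
  have r: "(-1/2::real) gchoose (Suc n) = (-1/2 - real n) * ((-1/2) gchoose n) / (real n + 1)"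
    using gbinomial_mult_1[of "-1/2::real" n] by (simp add: field_simps)
  show ?case unfolding r bb.simps Suc[symmetric] by (simp add: field_simps)
qed simp

lemma wallis: "((\<lambda>t. sin t ^ (2*n)) has_integral (pi/2 * bb n)) {0..pi/2}"
proof (induction n)
  case 0
  show ?case using has_integral_const_real[of "1::real" 0 "pi/2"] by simp
next
  case (Suc n)
  define F :: "real \<Rightarrow> real" where "F t = sin t ^ (2*n+1) * cos t" for t
  define F' :: "real \<Rightarrow> real" where "F' t = (2*real n+1) * sin t ^ (2*n) - (2*real n+2) * sin t ^ (2*n+2)" for t
  have d: "(F has_vector_derivative F' t) (at t within {0..pi/2})" for t
  proof -
    have d1: "((\<lambda>t. sin t ^ (2*n+1)) has_real_derivative (of_nat (2*n+1) * (cos t * sin t ^ (2*n+1 - Suc 0)))) (at t)"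
      by (rule DERIV_power[OF DERIV_sin])
    have d1': "((\<lambda>t. sin t ^ (2*n+1)) has_real_derivative ((2*real n+1) * sin t ^ (2*n) * cos t)) (at t)"
      using d1 by (simp add: algebra_simps)
    have "(F has_real_derivative ((2*real n+1) * sin t ^ (2*n) * cos t * cos t - sin t ^ (2*n+1) * sin t)) (at t)"
      unfolding F_def using DERIV_mult[OF d1' DERIV_cos[of t]] by (simp add: algebra_simps)
    moreover have "(2*real n+1) * sin t ^ (2*n) * cos t * cos t - sin t ^ (2*n+1) * sin t = F' t"
    proof -
      have cc: "cos t * cos t = 1 - sin t ^ 2" using sin_cos_squared_add[of t] by (simp add: power2_eq_square)
      have e1: "(2*real n+1) * sin t ^ (2*n) * cos t * cos t = (2*real n+1) * sin t ^ (2*n) * (1 - sin t ^ 2)"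
        using cc by (simp only: mult.assoc)
      have e2: "sin t ^ (2*n+1) * sin t = sin t ^ (2*n) * sin t ^ 2"
        by (simp only: power_add power_one_right power2_eq_square mult.assoc)
      have e3: "sin t ^ (2*n+2) = sin t ^ (2*n) * sin t ^ 2" by (simp only: power_add)
      have alg: "(2*m+1)*X*(1-Y) - X*Y = (2*m+1)*X - (2*m+2)*(X*Y)" for m X Y :: real
        by (simp add: algebra_simps)
      show ?thesis unfolding F'_def e1 e2 e3 alg ..
    qed
    ultimately show ?thesis
      by (simp add: has_real_derivative_iff_has_vector_derivative has_vector_derivative_at_within)
  qed
  have "(F' has_integral (F (pi/2) - F 0)) {0..pi/2}"
    by (rule fundamental_theorem_of_calculus) (auto intro: d)
  hence i0: "(F' has_integral 0) {0..pi/2}" by (simp add: F_def)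
  have i1: "((\<lambda>t. (2*real n+1) * sin t ^ (2*n)) has_integral (2*real n+1) * (pi/2 * bb n)) {0..pi/2}"
    using has_integral_mult_right[OF Suc] by simp
  have "((\<lambda>t. (2*real n+1) * sin t ^ (2*n) - F' t) has_integral (2*real n+1) * (pi/2 * bb n) - 0) {0..pi/2}"
    by (rule has_integral_diff[OF i1 i0])
  hence "((\<lambda>t. (2*real n+2) * sin t ^ (2*n+2)) has_integral (2*real n+1) * (pi/2 * bb n)) {0..pi/2}"
    by (simp add: F'_def)
  hence "((\<lambda>t. (1/(2*real n+2)) * ((2*real n+2) * sin t ^ (2*n+2))) has_integral
          (1/(2*real n+2)) * ((2*real n+1) * (pi/2 * bb n))) {0..pi/2}"
    by (rule has_integral_mult_right)
  moreover have "(\<lambda>t. (1/(2*real n+2)) * ((2*real n+2) * sin t ^ (2*n+2))) = (\<lambda>t. sin t ^ (2 * Suc n))"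
    by (auto simp: field_simps)
  moreover have "(1/(2*real n+2)) * ((2*real n+1) * (pi/2 * bb n)) = pi/2 * bb (Suc n)"
    by (simp add: field_simps)
  ultimately show ?case by (simp only:)
qed

definition S :: "real \<Rightarrow> real" where "S x = (\<Sum>n. aa n * x^n)"

lemma integrand_sums:
  assumes x: "0 \<le> x" "x < 1"
  shows "(\<lambda>n. bb n * x^n * sin t ^ (2*n)) sums (1 / sqrt (1 - sqrt x ^ 2 * sin t ^ 2))"
proof -
  have s1: "sin t ^ 2 \<le> 1" using abs_sin_le_one[of t] abs_square_le_1 by blast
  have xs: "x * sin t ^ 2 \<le> x" by (rule mult_left_le[OF s1 x(1)])
  have xs0: "x * sin t ^ 2 \<ge> 0" using x by simp
  have z: "\<bar>- x * sin t ^ 2\<bar> < 1"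
    using x xs xs0 by (simp add: abs_mult)
  from gen_binomial_real[OF z, of "-1/2"]
  have "(\<lambda>n. ((-1/2) gchoose n) * (- x * sin t ^ 2) ^ n) sums (1 + - x * sin t ^ 2) powr (-1/2)" .
  moreover have "((-1/2) gchoose n) * (- x * sin t ^ 2) ^ n = bb n * x^n * sin t ^ (2*n)" for n
  proof -
    have "(- x * sin t ^ 2) ^ n = (-1)^n * x^n * sin t ^ (2*n)"
      by (simp add: power_mult_distrib power_mult power_minus[of "x * sin t ^ 2"] mult.assoc)
    thus ?thesis unfolding bb_gchoose[symmetric] by simp
  qed
  moreover have "(1 + - x * sin t ^ 2) powr (-1/2) = 1 / sqrt (1 - sqrt x ^ 2 * sin t ^ 2)"
  proof -
    have pos: "1 - x * sin t ^ 2 > 0" using x xs by linarith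
    thus ?thesis using x by (simp add: powr_minus_divide powr_half_sqrt)
  qed
  ultimately show ?thesis by simp
qed

lemma K_series:
  assumes x: "0 \<le> x" "x < 1"
  shows "(\<lambda>n. pi/2 * (aa n * x^n)) sums K x"
proof -
  define f where "f n t = bb n * x^n * sin t ^ (2*n)" for n t
  define g where "g t = 1 / sqrt (1 - sqrt x ^ 2 * sin t ^ 2)" for t
  have ul: "uniform_limit {0..pi/2} (\<lambda>n t. \<Sum>i<n. f i t) (\<lambda>t. suminf (\<lambda>i. f i t)) sequentially"
  proof (rule Weierstrass_m_test)
    show "norm (f n t) \<le> x^n" if "t \<in> {0..pi/2}" for n t
    proof -
      have "\<bar>sin t\<bar> ^ (2*n) \<le> 1" by (rule power_le_one) (auto simp: abs_sin_le_one)
      hence "\<bar>sin t ^ (2*n)\<bar> \<le> 1" by (simp only: power_abs)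
      moreover have "bb n \<le> 1" "bb n > 0" by (rule bb_le1, rule bb_pos)
      ultimately have "\<bar>bb n\<bar> * \<bar>x^n\<bar> * \<bar>sin t ^ (2*n)\<bar> \<le> 1 * x^n * 1"
        using x by (intro mult_mono) auto
      thus ?thesis unfolding f_def by (simp add: abs_mult)
    qed
    show "summable (\<lambda>n. x^n)" using x by simp
  qed
  have cont: "continuous_on {0..pi/2} (\<lambda>t. \<Sum>i<n. f i t)" for n
    unfolding f_def by (intro continuous_intros)
  obtain I J where I: "\<And>n. ((\<lambda>t. \<Sum>i<n. f i t) has_integral I n) {0..pi/2}"
    and J: "((\<lambda>t. suminf (\<lambda>i. f i t)) has_integral J) {0..pi/2}" and lim: "I \<longlonglongrightarrow> J"
    using uniform_limit_integral[OF ul cont] by auto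
  have "suminf (\<lambda>i. f i t) = g t" for t
    unfolding f_def g_def using integrand_sums[OF x] by (simp add: sums_iff)
  hence J': "(g has_integral J) {0..pi/2}" using J by simp
  hence "J = K x" unfolding K_def ellipticK_def g_def by (simp add: integral_unique)
  have "((\<lambda>t. \<Sum>i<n. f i t) has_integral (\<Sum>i<n. pi/2 * (aa i * x^i))) {0..pi/2}" for n
    unfolding f_def
  proof (rule has_integral_sum)
    show "finite {..<n}" by simp
    fix i
    have "((\<lambda>t. (bb i * x^i) * sin t ^ (2*i)) has_integral (bb i * x^i) * (pi/2 * bb i)) {0..pi/2}"
      by (rule has_integral_mult_right[OF wallis])
    thus "((\<lambda>t. bb i * x ^ i * sin t ^ (2 * i)) has_integral pi / 2 * (aa i * x ^ i)) {0..pi / 2}"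
      by (simp add: aa_def power2_eq_square algebra_simps)
  qed
  hence "I n = (\<Sum>i<n. pi/2 * (aa i * x^i))" for n using I has_integral_unique by blast
  hence "I = (\<lambda>n. \<Sum>i<n. pi/2 * (aa i * x^i))" by (rule ext)
  with lim \<open>J = K x\<close> show ?thesis unfolding sums_def by simp
qed

lemma aa_pos: "aa n > 0" unfolding aa_def using bb_pos[of n] by simp
lemma aa_le1: "aa n \<le> 1" unfolding aa_def using bb_pos[of n] bb_le1[of n]
  by (simp add: power_le_one)

lemma summable_aa: assumes "\<bar>x\<bar> < 1" shows "summable (\<lambda>n. aa n * x^n)"
proof (rule summable_comparison_test')
  show "summable (\<lambda>n. \<bar>x\<bar>^n)" using assms by simp
  show "norm (aa n * x^n) \<le> \<bar>x\<bar>^n" for n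
    using aa_pos[of n] aa_le1[of n] by (simp add: abs_mult power_abs mult_left_le_one_le)
qed

lemma K_eq_S: assumes "0 \<le> x" "x < 1" shows "K x = pi/2 * S x"
proof -
  have "(\<lambda>n. aa n * x^n) sums S x" unfolding S_def
    using summable_aa[of x] assms by (simp add: summable_sums)
  hence "(\<lambda>n. pi/2 * (aa n * x^n)) sums (pi/2 * S x)" by (rule sums_mult)
  from sums_unique2[OF K_series[OF assms] this] show ?thesis .
qed



lemma aa_Suc: "aa (Suc n) = aa n * ((2 * real n + 1) / (2 * real n + 2))^2"
  unfolding aa_def by (simp add: power_mult_distrib power_divide)

definition Sd :: "real \<Rightarrow> real" where "Sd x = (\<Sum>n. diffs aa n * x^n)"

lemma summable_diffs_aa: "\<bar>x\<bar> < 1 \<Longrightarrow> summable (\<lambda>n. diffs aa n * x^n)"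
  by (rule termdiff_converges[of x 1]) (auto intro: summable_aa)

lemma S_deriv: assumes "\<bar>x\<bar> < 1" shows "(S has_real_derivative Sd x) (at x)"
proof -
  define k where "k = (1 + \<bar>x\<bar>) / 2"
  have k: "\<bar>k\<bar> < 1" "\<bar>x\<bar> < \<bar>k\<bar>" using assms by (auto simp: k_def)
  show ?thesis unfolding S_def Sd_def
    by (rule termdiffs_strong[OF summable_aa[OF k(1)]]) (use k in simp)
qed

definition tt :: "nat \<Rightarrow> real" where "tt n = real n * aa n - real (n - 1) * aa (n - 1)"

lemma diffs_tt: "diffs tt n = aa n / 4"
proof -
  have "diffs tt n = (real n + 1) * ((real n + 1) * aa (Suc n) - real n * aa n)"
    by (simp add: diffs_def tt_def algebra_simps)
  also have "\<dots> = aa n * ((real n+1)^2 * ((2 * real n + 1) / (2 * real n + 2))^2 - real n * (real n + 1))"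
    unfolding aa_Suc by (simp add: algebra_simps power2_eq_square)
  also have "(real n+1)^2 * ((2 * real n + 1) / (2 * real n + 2))^2 = (2 * real n + 1)^2 / 4"
  proof -
    have hn: "real n + 1 > 0" by simp
    have e: "2 * real n + 2 = 2 * (real n + 1)" by simp
    have sq_aux: "(m::real) \<noteq> 0 \<Longrightarrow> m^2 * (a/(2*m))^2 = a^2/4" for m a
      by (simp add: power_divide power_mult_distrib)
    show ?thesis unfolding e using hn by (intro sq_aux) simp
  qed
  also have "aa n * ((2 * real n + 1)^2 / 4 - real n * (real n + 1)) = aa n / 4"
    by (simp add: power2_eq_square field_simps)
  finally show ?thesis .
qed

lemma T_sums: assumes "\<bar>x\<bar> < 1"
  shows "(\<lambda>n. tt n * x^n) sums (x * (1 - x) * Sd x)"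
proof -
  define d where "d n = diffs aa n * x^n" for n
  have sd: "d sums Sd x" unfolding d_def Sd_def using summable_diffs_aa[OF assms] by (simp add: summable_sums)
  define g where "g n = (if n = 0 then 0 else diffs aa (n - 1) * x^n)" for n
  define h where "h n = (if n < 2 then 0 else diffs aa (n - 2) * x^n)" for n
  have "(\<lambda>n. x * d n) sums (x * Sd x)" by (rule sums_mult[OF sd])
  moreover have "(\<lambda>n. x * d n) = (\<lambda>n. g (Suc n))" by (auto simp: g_def d_def)
  ultimately have "(\<lambda>n. g (Suc n)) sums (x * Sd x)" by simp
  hence "g sums (x * Sd x + g 0)" by (simp only: sums_Suc_iff)
  hence gs: "g sums (x * Sd x)" by (simp add: g_def)
  have "(\<lambda>n. x^2 * d n) sums (x^2 * Sd x)" by (rule sums_mult[OF sd])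
  moreover have "(\<lambda>n. x^2 * d n) = (\<lambda>n. h (n + 2))" by (auto simp: h_def d_def power_add power2_eq_square mult_ac)
  ultimately have "(\<lambda>n. h (n + 2)) sums (x^2 * Sd x)" by simp
  hence "h sums (x^2 * Sd x + (\<Sum>i<2. h i))" by (simp only: sums_iff_shift)
  moreover have "(\<Sum>i<2. h i) = 0" by (simp add: h_def numeral_2_eq_2)
  ultimately have hs: "h sums (x^2 * Sd x)" by simp
  have "(\<lambda>n. g n - h n) sums (x * Sd x - x^2 * Sd x)" by (rule sums_diff[OF gs hs])
  moreover have "g n - h n = tt n * x^n" for n
  proof (cases n)
    case 0 thus ?thesis by (simp add: g_def h_def tt_def)
  next
    case (Suc m)
    show ?thesis
    proof (cases m)
      case 0 thus ?thesis using Suc by (simp add: g_def h_def tt_def diffs_def)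
    next
      case (Suc k)
      thus ?thesis using \<open>n = Suc m\<close> by (simp add: g_def h_def tt_def diffs_def algebra_simps)
    qed
  qed
  ultimately show ?thesis by (simp add: algebra_simps power2_eq_square)
qed

definition T :: "real \<Rightarrow> real" where "T x = x * (1 - x) * Sd x"

lemma T_deriv: assumes "\<bar>x\<bar> < 1" shows "(T has_real_derivative S x / 4) (at x)"
proof -
  define k where "k = (1 + \<bar>x\<bar>) / 2"
  have k: "\<bar>k\<bar> < 1" "\<bar>x\<bar> < \<bar>k\<bar>" using assms by (auto simp: k_def)
  have sm: "summable (\<lambda>n. tt n * k^n)" using T_sums[OF k(1)] by (rule sums_summable)
  have d: "((\<lambda>x. \<Sum>n. tt n * x^n) has_real_derivative (\<Sum>n. diffs tt n * x^n)) (at x)"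
    by (rule termdiffs_strong[OF sm]) (use k in simp)
  have "(\<Sum>n. diffs tt n * x^n) = S x / 4"
    unfolding diffs_tt S_def using summable_aa[OF assms]
    by (simp add: suminf_divide[symmetric])
  with d have d2: "((\<lambda>x. \<Sum>n. tt n * x^n) has_real_derivative S x / 4) (at x)" by simp
  show ?thesis
  proof (rule has_field_derivative_transform_within_open[OF d2, of "{-1<..<1}"])
    show "open {-1<..<(1::real)}" by simp
    show "x \<in> {-1<..<1}" using assms by auto
    fix y :: real assume "y \<in> {-1<..<1}"
    hence "\<bar>y\<bar> < 1" by auto
    thus "(\<Sum>n. tt n * y^n) = T y" unfolding T_def using T_sums by (simp add: sums_iff)
  qed
qed



lemma aa_nonneg: "aa n \<ge> 0" using aa_pos[of n] by simp
lemma diffs_aa_nonneg: "diffs aa n \<ge> 0" unfolding diffs_def using aa_nonneg by simp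

lemma S_ge1: assumes "0 \<le> x" "x < 1" shows "S x \<ge> 1"
proof -
  have "(\<Sum>n<1. aa n * x^n) \<le> S x" unfolding S_def
    by (rule sum_le_suminf[OF summable_aa]) (use assms aa_nonneg in \<open>auto intro!: mult_nonneg_nonneg\<close>)
  thus ?thesis by (simp add: aa_def)
qed

lemma S_pos: "0 \<le> x \<Longrightarrow> x < 1 \<Longrightarrow> S x > 0"
  using S_ge1[of x] by simp

lemma diffs_aa_pos: "diffs aa n > 0" unfolding diffs_def using aa_pos by simp

lemma Sd_nonneg: assumes "0 \<le> x" "x < 1" shows "Sd x \<ge> 0"
  unfolding Sd_def using assms diffs_aa_nonneg
  by (intro suminf_nonneg summable_diffs_aa) (auto intro!: mult_nonneg_nonneg)

lemma S_mono: assumes "0 \<le> x" "x \<le> y" "y < 1" shows "S x \<le> S y"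
  unfolding S_def
proof (rule suminf_le)
  show "aa n * x^n \<le> aa n * y^n" for n
    using assms aa_pos[of n] by (intro mult_left_mono power_mono) auto
qed (use assms in \<open>auto intro!: summable_aa\<close>)

lemma S_half_lower: "S (1/2) \<ge> 118/100"
proof -
  have "(\<Sum>n<10. aa n * (1/2)^n) \<le> S (1/2)" unfolding S_def
    by (rule sum_le_suminf[OF summable_aa]) (auto intro!: mult_nonneg_nonneg aa_nonneg)
  moreover have "(\<Sum>n<10. aa n * (1/2::real)^n) \<ge> 118/100"
    by (simp add: aa_def numeral_eq_Suc lessThan_Suc)
  ultimately show ?thesis by linarith
qed

lemma Sd_half_lower: "Sd (1/2) \<ge> 538/1000"
proof -
  have "(\<Sum>n<10. diffs aa n * (1/2)^n) \<le> Sd (1/2)" unfolding Sd_def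
    by (rule sum_le_suminf[OF summable_diffs_aa]) (auto intro!: mult_nonneg_nonneg diffs_aa_nonneg)
  moreover have "(\<Sum>n<10. diffs aa n * (1/2::real)^n) \<ge> 538/1000"
    by (simp add: diffs_def aa_def numeral_eq_Suc lessThan_Suc)
  ultimately show ?thesis by linarith
qed

lemma S_half_upper: "S (1/2) \<le> 1183/1000"
proof -
  have sm: "summable (\<lambda>n. aa n * (1/2::real)^n)" by (rule summable_aa) simp
  have "S (1/2) = (\<Sum>n. aa (n + 10) * (1/2)^(n + 10)) + (\<Sum>i<10. aa i * (1/2)^i)"
    unfolding S_def by (rule suminf_split_initial_segment[OF sm])
  also have "(\<Sum>n. aa (n + 10) * (1/2::real)^(n + 10)) \<le> (\<Sum>n. (1/2::real)^(n + 10))"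
  proof (rule suminf_le)
    show "aa (n + 10) * (1/2::real)^(n + 10) \<le> (1/2)^(n + 10)" for n
      using aa_le1[of "n+10"] by (simp add: mult_left_le_one_le aa_pos less_imp_le)
    show "summable (\<lambda>n. aa (n + 10) * (1/2::real)^(n + 10))"
      using sm by (rule summable_ignore_initial_segment)
    show "summable (\<lambda>n. (1/2::real)^(n + 10))"
      by (rule summable_ignore_initial_segment) simp
  qed
  also have "(\<Sum>n. (1/2::real)^(n + 10)) = 1/512"
  proof -
    have "(\<Sum>n. (1/2::real)^(n + 10)) = (\<Sum>n. (1/2)^10 * (1/2::real)^n)" by (simp add: power_add mult.commute)
    also have "\<dots> = (1/2)^10 * 2" by (subst suminf_mult) (simp_all add: suminf_geometric)
    finally show ?thesis by (simp add: power_one_over)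
  qed
  also have "(\<Sum>i<10. aa i * (1/2::real)^i) \<le> 1183/1000 - 1/512"
    by (simp add: aa_def numeral_eq_Suc lessThan_Suc)
  finally show ?thesis by simp
qed



lemma aa_le_third: "aa n \<le> 1 / (3 * real n + 1)"
proof (induction n)
  case (Suc n)
  have pos: "3 * real n + 1 > 0" "2 * real n + 2 > 0" by simp_all
  have "aa (Suc n) = aa n * (2 * real n + 1)^2 / (2 * real n + 2)^2"
    by (simp add: aa_Suc power_divide)
  also have "\<dots> \<le> (1 / (3 * real n + 1)) * (2 * real n + 1)^2 / (2 * real n + 2)^2"
    by (intro divide_right_mono mult_right_mono Suc.IH) auto
  also have "\<dots> \<le> 1 / (3 * real (Suc n) + 1)"
  proof -
    define A where "A = (2 * real n + 1)^2"
    define B where "B = (2 * real n + 2)^2"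
    have P: "A * (3 * real n + 4) \<le> (3 * real n + 1) * B"
      unfolding A_def B_def by (simp add: power2_eq_square algebra_simps)
    have p4: "3 * real n + 4 > 0" by simp
    have Bp: "B > 0" unfolding B_def by simp
    have Q: "A \<le> (1 / (3 * real n + 4)) * ((3 * real n + 1) * B)"
      using P p4 by (simp add: field_simps)
    have ineq: "A / ((3 * real n + 1) * B) \<le> 1 / (3 * real n + 4)"
      by (rule mult_imp_div_pos_le) (use Q pos Bp in auto)
    have e2: "(1 / (3 * real n + 1)) * (2 * real n + 1)^2 / (2 * real n + 2)^2 = A / ((3 * real n + 1) * B)"
      unfolding A_def B_def by simp
    have e3: "3 * real (Suc n) + 1 = 3 * real n + 4" by simp
    show ?thesis unfolding e2 e3 by (rule ineq)
  qed
  finally show ?case .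
qed (simp add: aa_def)

lemma S_log_bound: assumes "0 \<le> y" "y < 1" shows "S y \<le> 1 + ln (1 / (1 - y)) / 3"
proof -
  have ls: "(\<lambda>n. y^n / real n) sums (- ln (1 - y))"
  proof -
    have "\<bar>-y\<bar> < 1" using assms by simp
    from ln_series'[OF this] have "(\<lambda>n. - ((- (- y))^n) / real n) sums ln (1 + - y)" .
    hence "(\<lambda>n. - (y^n / real n)) sums ln (1 - y)" by simp
    from sums_minus[OF this] show ?thesis by simp
  qed
  define g where "g n = (if n = 0 then 1 else 0) + (1/3) * (y^n / real n)" for n
  have gs: "g sums (1 + (1/3) * (- ln (1 - y)))"
    unfolding g_def by (intro sums_add sums_mult ls) (rule sums_single)
  have "S y \<le> suminf g" unfolding S_def
  proof (rule suminf_le)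
    fix n
    show "aa n * y^n \<le> g n"
    proof (cases n)
      case 0 thus ?thesis by (simp add: g_def aa_def)
    next
      case (Suc m)
      have "aa n \<le> 1 / (3 * real n)"
        using aa_le_third[of n] Suc by (smt (verit) divide_left_mono of_nat_0_le_iff mult_pos_pos of_nat_Suc)
      hence "aa n * y^n \<le> (1 / (3 * real n)) * y^n" using assms by (intro mult_right_mono) auto
      thus ?thesis using Suc by (simp add: g_def)
    qed
    show "summable (\<lambda>n. aa n * y^n)" using assms by (intro summable_aa) simp
    show "summable g" using gs by (rule sums_summable)
  qed
  also have "suminf g = 1 + ln (1 / (1 - y)) / 3"
    using sums_unique[OF gs] assms by (simp add: ln_div)
  finally show ?thesis .
qed

lemma e_lower: "exp (1::real) \<ge> 2718/1000"
  using abs_le_D2[OF e_approx_32] by simp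

lemma sqrt_ln_bound: assumes "0 < x" "x \<le> 1" shows "sqrt x * ln (1 / x) \<le> 2 / exp 1"
proof -
  define y where "y = 1 / sqrt x"
  have y: "y > 0" using assms by (simp add: y_def)
  have "ln y = ln (y / exp 1) + 1" using y by (simp add: ln_div)
  also have "\<dots> \<le> (y / exp 1 - 1) + 1" using y by (intro add_right_mono ln_le_minus_one) simp
  finally have ly: "ln y \<le> y / exp 1" by simp
  have "1 / x = y^2" using assms by (simp add: y_def power_divide)
  hence "ln (1 / x) = 2 * ln y" using y by (simp add: ln_realpow)
  hence "sqrt x * ln (1 / x) = 2 * sqrt x * ln y" by simp
  also have "\<dots> \<le> 2 * sqrt x * (y / exp 1)" using ly assms by (intro mult_left_mono) auto
  also have "\<dots> = 2 / exp 1" using assms by (simp add: y_def)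
  finally show ?thesis .
qed



lemma S_chain: "(f has_real_derivative f') (at x) \<Longrightarrow> 0 < f x \<Longrightarrow> f x < 1 \<Longrightarrow>
  ((\<lambda>x. S (f x)) has_real_derivative Sd (f x) * f') (at x)"
  by (rule DERIV_chain2[OF S_deriv]) auto

lemma T_chain: "(f has_real_derivative f') (at x) \<Longrightarrow> 0 < f x \<Longrightarrow> f x < 1 \<Longrightarrow>
  ((\<lambda>x. T (f x)) has_real_derivative S (f x) / 4 * f') (at x)"
  by (rule DERIV_chain2[OF T_deriv]) auto

definition u :: "real \<Rightarrow> real" where "u y = T y / S y"

lemma u_deriv: assumes "0 < y" "y < 1"
  shows "(u has_real_derivative (1/4 - (u y)^2 / (y * (1 - y)))) (at y)"
proof -
  have Sp: "S y > 0" using S_pos assms by simp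
  have d: "(u has_real_derivative ((S y / 4) * S y - T y * Sd y) / (S y * S y)) (at y)"
    unfolding u_def[abs_def]
    by (rule DERIV_divide[OF T_deriv S_deriv]) (use assms Sp in auto)
  have "((S y / 4) * S y - T y * Sd y) / (S y * S y) = 1/4 - (u y)^2 / (y * (1 - y))"
    using Sp assms unfolding u_def T_def by (simp add: field_simps power2_eq_square)
  with d show ?thesis by simp
qed

lemma u_chain: "(f has_real_derivative f') (at x) \<Longrightarrow> 0 < f x \<Longrightarrow> f x < 1 \<Longrightarrow>
  ((\<lambda>x. u (f x)) has_real_derivative (1/4 - (u (f x))^2 / (f x * (1 - f x))) * f') (at x)"
  by (rule DERIV_chain2[OF u_deriv]) auto

definition Wf :: "real \<Rightarrow> real" where "Wf x = T x * S (1 - x) + S x * T (1 - x)"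

lemma Wf_deriv: assumes "0 < x" "x < 1" shows "(Wf has_real_derivative 0) (at x)"
proof -
  have d1: "((\<lambda>x. 1 - x) has_real_derivative -1) (at x)" by (auto intro!: derivative_eq_intros)
  have dS: "(S has_real_derivative Sd x) (at x)" using S_deriv assms by simp
  have dT: "(T has_real_derivative S x / 4) (at x)" using T_deriv assms by simp
  have dS1: "((\<lambda>x. S (1 - x)) has_real_derivative Sd (1 - x) * -1) (at x)"
    by (rule S_chain[OF d1]) (use assms in auto)
  have dT1: "((\<lambda>x. T (1 - x)) has_real_derivative S (1 - x) / 4 * -1) (at x)"
    by (rule T_chain[OF d1]) (use assms in auto)
  have "(Wf has_real_derivative (S x / 4 * S (1 - x) + (Sd (1 - x) * -1) * T x) +
           (Sd x * T (1 - x) + (S (1 - x) / 4 * -1) * S x)) (at x)"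
    unfolding Wf_def[abs_def] by (rule DERIV_add[OF DERIV_mult[OF dT dS1] DERIV_mult[OF dS dT1]])
  moreover have "(S x / 4 * S (1 - x) + (Sd (1 - x) * -1) * T x) +
           (Sd x * T (1 - x) + (S (1 - x) / 4 * -1) * S x) = 0"
    unfolding T_def by (simp add: algebra_simps)
  ultimately show ?thesis by simp
qed

definition cW :: real where "cW = Wf (1/2)"

lemma Wf_const: assumes "0 < x" "x < 1" shows "Wf x = cW"
  unfolding cW_def by (rule DERIV_isconst3[of 0 1]) (use assms Wf_deriv in auto)

lemma cW_val: "cW = S (1/2) * Sd (1/2) / 2"
  unfolding cW_def Wf_def T_def by simp

lemma cW_lower: "cW \<ge> (118/100) * (538/1000) / 2"
proof -
  have "(118/100) * (538/1000) \<le> S (1/2) * Sd (1/2)"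
    using S_half_lower Sd_half_lower by (intro mult_mono) auto
  thus ?thesis unfolding cW_val by simp
qed

lemma u_sum: assumes "0 < x" "x < 1" shows "u x + u (1 - x) = cW / (S x * S (1 - x))"
proof -
  have A: "S x > 0" "S (1 - x) > 0" using assms S_pos by auto
  have "u x + u (1 - x) = Wf x / (S x * S (1 - x))"
    unfolding u_def Wf_def using A by (simp add: field_simps)
  thus ?thesis using Wf_const assms by simp
qed



lemma key_ineq: assumes x: "0 < x" "x \<le> 1/2"
  shows "(u x)^2 + (u (1 - x))^2 \<ge> x * (1 - x) / 16"
proof -
  define A where "A = S x"
  define B where "B = S (1 - x)"
  define L where "L = ln (1 / x)"
  define \<sigma> where "\<sigma> = sqrt (x * (1 - x))"
  define Q :: real where "Q = 1/2 + 2000/8154"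
  have A1: "A \<ge> 1" and B1: "B \<ge> 1" unfolding A_def B_def using x by (auto intro!: S_ge1)
  have hA: "A \<le> 1183/1000"
    using S_mono[of x "1/2"] S_half_upper x unfolding A_def by simp
  have hB: "B \<le> 1 + L / 3"
    using S_log_bound[of "1 - x"] x unfolding B_def L_def by simp
  have L0: "L \<ge> 0" unfolding L_def using x by simp
  have xx: "x * (1 - x) \<le> 1/4"
  proof -
    have "1/4 - x * (1 - x) = (x - 1/2)^2" by (simp add: power2_eq_square algebra_simps)
    thus ?thesis by (smt (verit) zero_le_power2)
  qed
  have xx0: "x * (1 - x) \<ge> 0" using x by (intro mult_nonneg_nonneg) auto
  have s0: "\<sigma> \<ge> 0" unfolding \<sigma>_def using xx0 by simp
  have s1: "\<sigma> \<le> 1/2"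
  proof -
    have "\<sigma> \<le> sqrt (1/4)" unfolding \<sigma>_def using xx by (rule real_sqrt_le_mono)
    also have "sqrt (1/4::real) = 1/2" by (simp add: real_sqrt_divide)
    finally show ?thesis .
  qed
  have s2: "\<sigma> \<le> sqrt x" unfolding \<sigma>_def using x by (intro real_sqrt_le_mono) (simp add: mult_left_le)
  have "\<sigma> * B \<le> \<sigma> * (1 + L / 3)" using hB s0 by (rule mult_left_mono)
  also have "\<dots> = \<sigma> + \<sigma> * L / 3" by (simp add: algebra_simps)
  also have "\<dots> \<le> 1/2 + sqrt x * L / 3"
    using s1 mult_right_mono[OF s2 L0] by simp
  also have "sqrt x * L \<le> 2 / exp 1" unfolding L_def using x by (intro sqrt_ln_bound) auto
  hence "1/2 + sqrt x * L / 3 \<le> 1/2 + (2 / exp 1) / 3" by simp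
  also have "2 / exp (1::real) \<le> 2 / (2718/1000)"
    using e_lower by (intro divide_left_mono) auto
  hence "1/2 + (2 / exp 1) / 3 \<le> Q" unfolding Q_def by simp
  finally have sB: "\<sigma> * B \<le> Q" .
  have sAB: "\<sigma> * B * A \<le> Q * (1183/1000)"
    using sB hA s0 B1 A1 by (intro mult_mono) (auto simp: Q_def)
  have sq: "x * (1 - x) * (A * B)^2 = (\<sigma> * B * A)^2"
    unfolding \<sigma>_def using xx0 by (simp add: power_mult_distrib algebra_simps)
  have "(\<sigma> * B * A)^2 \<le> (Q * (1183/1000))^2"
    using sAB s0 B1 A1 by (intro power_mono) auto
  also have "(Q * (1183/1000))^2 \<le> 8 * ((118/100) * (538/1000) / 2)^2"
    unfolding Q_def by (simp add: power2_eq_square)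
  also have "((118/100) * (538/1000) / 2)^2 \<le> cW^2"
    using cW_lower by (intro power_mono) auto
  finally have main: "x * (1 - x) * (A * B)^2 \<le> 8 * cW^2" using sq by simp
  have ABp: "A * B > 0" using A1 B1 by simp
  have us: "u x + u (1 - x) = cW / (A * B)" unfolding A_def B_def using u_sum x by simp
  have "(u x + u (1 - x))^2 = cW^2 / (A * B)^2" unfolding us by (simp add: power_divide)
  also have "\<dots> \<ge> x * (1 - x) / 8"
  proof -
    have Pp: "(A * B)^2 > 0" using A1 B1 by simp
    have "x * (1 - x) / 8 * (A * B)^2 \<le> cW^2" using main by simp
    thus ?thesis using Pp by (simp add: le_divide_eq)
  qed
  finally have "(u x + u (1 - x))^2 \<ge> x * (1 - x) / 8" .
  moreover have "(u x + u (1 - x))^2 \<le> 2 * ((u x)^2 + (u (1 - x))^2)"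
  proof -
    have "0 \<le> (u x - u (1 - x))^2" by simp
    thus ?thesis by (simp add: power2_eq_square algebra_simps)
  qed
  ultimately show ?thesis by simp
qed



lemma lnc: "(f has_real_derivative f') (at x) \<Longrightarrow> 0 < f x \<Longrightarrow>
   ((\<lambda>x. ln (f x)) has_real_derivative (1 / f x) * f') (at x)"
  by (rule DERIV_chain2[OF DERIV_ln_divide]) auto

definition Dp :: "real \<Rightarrow> real \<Rightarrow> real" where "Dp p x = p * (1 - 2 * x) + u x - u (1 - x)"

lemma Dp_deriv: assumes "0 < x" "x < 1"
  shows "(Dp p has_real_derivative
     (p * (0 - 2 * 1) + (1/4 - (u x)^2 / (x * (1 - x))) * 1 - (1/4 - (u (1 - x))^2 / ((1 - x) * (1 - (1 - x)))) * (0 - 1))) (at x)"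
proof -
  have d1: "((\<lambda>x. 1 - x) has_real_derivative 0 - 1) (at x)" by (auto intro!: derivative_eq_intros)
  have du: "(u has_real_derivative (1/4 - (u x)^2 / (x * (1 - x))) * 1) (at x)" using u_deriv assms by simp
  have du1: "((\<lambda>x. u (1 - x)) has_real_derivative (1/4 - (u (1 - x))^2 / ((1 - x) * (1 - (1 - x)))) * (0 - 1)) (at x)"
    by (rule u_chain[OF d1]) (use assms in auto)
  have dl: "((\<lambda>x. p * (1 - 2 * x)) has_real_derivative p * (0 - 2 * 1)) (at x)"
    by (auto intro!: derivative_eq_intros)
  show ?thesis unfolding Dp_def[abs_def]
    by (rule DERIV_diff[OF DERIV_add[OF dl du] du1])
qed

lemma Dp_nonneg: assumes p: "p \<ge> 7/32" and x: "0 < x" "x \<le> 1/2" shows "Dp p x \<ge> 0"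
proof -
  have "Dp p (1/2) \<le> Dp p x"
  proof (rule DERIV_nonpos_imp_decreasing_open[OF x(2)])
    fix y assume y: "x < y" "y < 1/2"
    let ?d = "p * (0 - 2 * 1) + (1/4 - (u y)^2 / (y * (1 - y))) * 1 - (1/4 - (u (1 - y))^2 / ((1 - y) * (1 - (1 - y)))) * (0 - 1)"
    have dd: "(Dp p has_real_derivative ?d) (at y)" using Dp_deriv x y by simp
    have yy: "y * (1 - y) > 0" using x y by simp
    have k: "(u y)^2 + (u (1 - y))^2 \<ge> y * (1 - y) / 16" using key_ineq x y by simp
    have "((u y)^2 + (u (1 - y))^2) / (y * (1 - y)) \<ge> 1/16"
      using k yy by (simp add: le_divide_eq)
    moreover have "?d = 1/2 - 2 * p - ((u y)^2 + (u (1 - y))^2) / (y * (1 - y))"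
      by (simp add: add_divide_distrib algebra_simps)
    ultimately have "?d \<le> 0" using p by linarith
    with dd show "\<exists>d. (Dp p has_real_derivative d) (at y) \<and> d \<le> 0" by blast
  next
    show "continuous_on {x..1/2} (Dp p)"
    proof (rule continuous_at_imp_continuous_on, rule ballI)
      fix y assume "y \<in> {x..1/2}"
      hence "0 < y" "y < 1" using x by auto
      from Dp_deriv[OF this] show "isCont (Dp p) y" by (rule DERIV_isCont)
    qed
  qed
  moreover have "Dp p (1/2) = 0" by (simp add: Dp_def)
  ultimately show ?thesis by simp
qed

definition Fp :: "real \<Rightarrow> real \<Rightarrow> real" where
  "Fp p x = p * ln x + p * ln (1 - x) + ln (S x) + ln (S (1 - x))"

lemma Fp_deriv: assumes "0 < x" "x < 1"
  shows "(Fp p has_real_derivative Dp p x / (x * (1 - x))) (at x)"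
proof -
  have d1: "((\<lambda>x. 1 - x) has_real_derivative 0 - 1) (at x)" by (auto intro!: derivative_eq_intros)
  have dx: "((\<lambda>x. x) has_real_derivative 1) (at x)" by (rule DERIV_ident)
  have SA: "S x > 0" "S (1 - x) > 0" using S_pos assms by auto
  have a1: "((\<lambda>x. p * ln x) has_real_derivative p * ((1 / x) * 1)) (at x)"
    by (rule DERIV_cmult[OF lnc[OF dx]]) (use assms in simp)
  have a2: "((\<lambda>x. p * ln (1 - x)) has_real_derivative p * ((1 / (1 - x)) * (0 - 1))) (at x)"
    by (rule DERIV_cmult[OF lnc[OF d1]]) (use assms in simp)
  have dS: "(S has_real_derivative Sd x) (at x)" using S_deriv assms by simp
  have a3: "((\<lambda>x. ln (S x)) has_real_derivative (1 / S x) * Sd x) (at x)"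
    by (rule lnc[OF dS]) (use SA in simp)
  have dS1: "((\<lambda>x. S (1 - x)) has_real_derivative Sd (1 - x) * (0 - 1)) (at x)"
    by (rule S_chain[OF d1]) (use assms in auto)
  have a4: "((\<lambda>x. ln (S (1 - x))) has_real_derivative (1 / S (1 - x)) * (Sd (1 - x) * (0 - 1))) (at x)"
    by (rule lnc[OF dS1]) (use SA in simp)
  have all: "(Fp p has_real_derivative p * ((1 / x) * 1) + p * ((1 / (1 - x)) * (0 - 1)) + (1 / S x) * Sd x
        + (1 / S (1 - x)) * (Sd (1 - x) * (0 - 1))) (at x)"
    unfolding Fp_def[abs_def] by (rule DERIV_add[OF DERIV_add[OF DERIV_add[OF a1 a2] a3] a4])
  have xx: "x \<noteq> 0" "1 - x \<noteq> 0" using assms by auto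
  have "p * ((1 / x) * 1) + p * ((1 / (1 - x)) * (0 - 1)) + (1 / S x) * Sd x
        + (1 / S (1 - x)) * (Sd (1 - x) * (0 - 1)) = Dp p x / (x * (1 - x))"
    unfolding Dp_def u_def T_def using SA xx by (simp add: field_simps)
  with all show ?thesis by simp
qed

lemma Fp_max_left: assumes p: "p \<ge> 7/32" and x: "0 < x" "x \<le> 1/2" shows "Fp p x \<le> Fp p (1/2)"
proof (rule DERIV_nonneg_imp_increasing_open[OF x(2)])
  fix y assume y: "x < y" "y < 1/2"
  have dd: "(Fp p has_real_derivative Dp p y / (y * (1 - y))) (at y)" using Fp_deriv x y by simp
  have "Dp p y \<ge> 0" using Dp_nonneg p x y by simp
  moreover have "y * (1 - y) > 0" using x y by simp
  ultimately have "Dp p y / (y * (1 - y)) \<ge> 0" by simp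
  with dd show "\<exists>d. (Fp p has_real_derivative d) (at y) \<and> d \<ge> 0" by blast
next
  show "continuous_on {x..1/2} (Fp p)"
  proof (rule continuous_at_imp_continuous_on, rule ballI)
    fix y assume "y \<in> {x..1/2}"
    hence "0 < y" "y < 1" using x by auto
    from Fp_deriv[OF this] show "isCont (Fp p) y" by (rule DERIV_isCont)
  qed
qed

lemma Fp_max: assumes p: "p \<ge> 7/32" and x: "0 < x" "x < 1" shows "Fp p x \<le> Fp p (1/2)"
proof (cases "x \<le> 1/2")
  case True thus ?thesis using Fp_max_left p x by simp
next
  case False
  have "Fp p x = Fp p (1 - x)" unfolding Fp_def by simp
  also have "\<dots> \<le> Fp p (1/2)" using Fp_max_left[of p "1 - x"] p x False by simp
  finally show ?thesis .
qed



lemma expFp: assumes "0 < x" "x < 1"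
  shows "exp (Fp p x) = (x - x^2) powr p * S x * S (1 - x)"
proof -
  have SA: "S x > 0" "S (1 - x) > 0" using S_pos assms by auto
  have xx: "x - x^2 = x * (1 - x)" by (simp add: power2_eq_square algebra_simps)
  have pos: "x * (1 - x) > 0" using assms by simp
  have l: "ln (x * (1 - x)) = ln x + ln (1 - x)" using assms by (simp add: ln_mult)
  have "(x - x^2) powr p = (x * (1 - x)) powr p" unfolding xx ..
  also have "\<dots> = exp (p * ln (x * (1 - x)))" using assms by (simp add: powr_def mult.commute)
  also have "\<dots> = exp (p * ln x + p * ln (1 - x))" unfolding l by (simp add: algebra_simps)
  finally have "(x - x^2) powr p = exp (p * ln x + p * ln (1 - x))" .
  thus ?thesis unfolding Fp_def using SA by (simp add: exp_add)
qed

lemma part1: assumes p: "p \<ge> 7/32" and r: "0 < r" "r < 1"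
  shows "sqrt ((r - r^2) powr p * K (1 - r) * K r) \<le> K (1/2) / 2 powr p"
proof -
  have Kr: "K r = pi/2 * S r" and K1r: "K (1 - r) = pi/2 * S (1 - r)" and Kh: "K (1/2) = pi/2 * S (1/2)"
    using K_eq_S r by auto
  have X: "(r - r^2) powr p * K (1 - r) * K r = (pi/2)^2 * exp (Fp p r)"
    unfolding expFp[OF r] Kr K1r by (simp add: power2_eq_square algebra_simps)
  have "exp (Fp p r) \<le> exp (Fp p (1/2))" using Fp_max[OF p r] by simp
  hence "(r - r^2) powr p * K (1 - r) * K r \<le> (pi/2)^2 * exp (Fp p (1/2))"
    unfolding X by (intro mult_left_mono) auto
  also have "exp (Fp p (1/2)) = (1/4) powr p * S (1/2) * S (1/2)"
    using expFp[of "1/2" p] by (simp add: power2_eq_square)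
  also have "(pi/2)^2 * ((1/4) powr p * S (1/2) * S (1/2)) = (K (1/2) / 2 powr p)^2"
  proof -
    have "(1/4::real) powr p = (1 / 2 powr p)^2"
    proof -
      have "(1/4::real) powr p = ((1/2) powr p)^2"
        by (simp add: powr_powr[symmetric] powr_realpow[symmetric] mult.commute power2_eq_square powr_mult[symmetric])
      also have "(1/2::real) powr p = 1 / 2 powr p" by (simp add: powr_divide)
      finally show ?thesis .
    qed
    thus ?thesis unfolding Kh by (simp add: power2_eq_square field_simps)
  qed
  finally have le: "(r - r^2) powr p * K (1 - r) * K r \<le> (K (1/2) / 2 powr p)^2" .
  have Yp: "K (1/2) / 2 powr p \<ge> 0" unfolding Kh using S_pos[of "1/2"] by simp
  have "sqrt ((r - r^2) powr p * K (1 - r) * K r) \<le> sqrt ((K (1/2) / 2 powr p)^2)"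
    using le by (rule real_sqrt_le_mono)
  also have "\<dots> = \<bar>K (1/2) / 2 powr p\<bar>" by (rule real_sqrt_abs)
  also have "\<dots> = K (1/2) / 2 powr p" using Yp by (rule abs_of_nonneg)
  finally show ?thesis .
qed


theorem mainTheorem15:
  fixes p :: real
  assumes "p \<ge> 7/32"
  shows "(\<forall>r::real. 0 < r \<and> r < 1 \<longrightarrow>
           sqrt ((r - r^2) powr p * K (1 - r) * K r) \<le> K (1/2) / 2 powr p) \<and>
         K (1/2) / 2 powr p = pi * sqrt pi / (2 powr (p + 1) * (Gamma (3/4))^2)"
  using part1[OF assms] part2[of p] by blast

end
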